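(* Let $\Sigma\in\mathbb{R}^{d\times d}$ be a fixed positive definite matrix, let $x_1,\dots,x_n$ be i.i.d. $\mathcal{N}(0,\Sigma)$ forming the columns of $X$, and let $\mathcal{M}$ be a (possibly randomized, measurable) mechanism with $0\preceq\mathcal{M}(X)\preceq\beta_u I$ always, for a constant $\beta_u>0$. Set $\gamma=1+\beta_u/\lambda_{\min}(\Sigma)$. Then for every $i\in[n]$ and every $T\ge 6\gamma d^{3/2}$, $$\int_T^\infty \Pr\big[\,|\mathcal{A}(x_i,\mathcal{M}(X))|\ge t\,\big]\,dt\ \le\ 9\gamma\sqrt d\,\exp\Big(-\frac{T}{9\gamma\sqrt d}\Big).$$
   Context: For $z\in\mathbb{R}^d$ and a matrix $M$, $\mathcal{A}(z,M)=\langle M-\Sigma,\ \tfrac12(\Sigma^{-1}zz^{\top}\Sigma^{-1}-\Sigma^{-1})\rangle$ with $\langle A,B\rangle=\mathrm{Tr}(A^\top B)$ (the gradient with respect to $\Sigma$ of $\ln$ of the $\mathcal{N}(0,\Sigma)$ density at $z$). $\lambda_{\min}$ denotes the smallest eigenvalue; $\preceq$ is the Loewner order. Probabilities are over $X$ and the randomness of $\mathcal{M}$, with $\Sigma$ fixed. *)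

theory Defs
  imports "HOL-Analysis.Analysis" "HOL-Probability.Probability"
begin

definition sym_mat :: "real^'d^'d \<Rightarrow> bool" where
  "sym_mat A \<longleftrightarrow> transpose A = A"

definition pos_def :: "real^'d^'d \<Rightarrow> bool" where
  "pos_def A \<longleftrightarrow> sym_mat A \<and> (\<forall>v. v \<noteq> 0 \<longrightarrow> v \<bullet> (A *v v) > 0)"

definition psd :: "real^'d^'d \<Rightarrow> bool" where
  "psd A \<longleftrightarrow> sym_mat A \<and> (\<forall>v. v \<bullet> (A *v v) \<ge> 0)"

definition loewner_le :: "real^'d^'d \<Rightarrow> real^'d^'d \<Rightarrow> bool" where
  "loewner_le A B \<longleftrightarrow> psd (B - A)"

definition real_eigenvalues :: "real^'d^'d \<Rightarrow> real set" where
  "real_eigenvalues A = {l. \<exists>v. v \<noteq> 0 \<and> A *v v = l *\<^sub>R v}"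

definition lambda_min :: "real^'d^'d \<Rightarrow> real" where
  "lambda_min A = Min (real_eigenvalues A)"

definition frob_inner :: "real^'d^'d \<Rightarrow> real^'d^'d \<Rightarrow> real" where
  "frob_inner A B = trace (transpose A ** B)"

definition outer :: "real^'d \<Rightarrow> real^'d \<Rightarrow> real^'d^'d" where
  "outer u v = (\<chi> i j. u $ i * v $ j)"

definition score :: "real^'d^'d \<Rightarrow> real^'d \<Rightarrow> real^'d^'d \<Rightarrow> real" where
  "score \<Sigma> z M = frob_inner (M - \<Sigma>)
     ((1/2) *\<^sub>R (matrix_inv \<Sigma> ** outer z z ** matrix_inv \<Sigma> - matrix_inv \<Sigma>))"

definition mvn_density :: "real^'d^'d \<Rightarrow> real^'d \<Rightarrow> real" where
  "mvn_density \<Sigma> z =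
     exp (- (z \<bullet> (matrix_inv \<Sigma> *v z)) / 2) / sqrt ((2 * pi) ^ CARD('d) * det \<Sigma>)"

end

theory Submission
  imports Defs
begin

lemma sym_dot:
  fixes A :: "real^'d^'d"
  assumes "sym_mat A" shows "x \<bullet> (A *v y) = (A *v x) \<bullet> y"
proof -
  have "x \<bullet> (A *v y) = (x v* A) \<bullet> y" by (simp add: dot_lmul_matrix)
  also have "x v* A = A *v x"
    using assms unfolding sym_mat_def by (metis vector_transpose_matrix)
  finally show ?thesis .
qed

lemma pd_inv:
  fixes S :: "real^'d^'d"
  assumes "pos_def S"
  shows "S ** matrix_inv S = mat 1" "matrix_inv S ** S = mat 1"
proof -
  have "\<forall>x. S *v x = 0 \<longrightarrow> x = 0"
    using assms unfolding pos_def_def by (metis inner_zero_right less_irrefl)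
  then have "invertible S"
    using matrix_left_invertible_ker invertible_left_inverse by blast
  then have "\<exists>A'. S ** A' = mat 1 \<and> A' ** S = mat 1" unfolding invertible_def by blast
  then have "S ** matrix_inv S = mat 1 \<and> matrix_inv S ** S = mat 1"
    unfolding matrix_inv_def by (rule someI_ex)
  then show "S ** matrix_inv S = mat 1" "matrix_inv S ** S = mat 1" by auto
qed

lemma inv_sym:
  fixes S :: "real^'d^'d"
  assumes "pos_def S"
  shows "sym_mat (matrix_inv S)"
proof -
  have sS: "transpose S = S" using assms unfolding pos_def_def sym_mat_def by auto
  have "transpose (matrix_inv S) ** S = mat 1"
    by (metis matrix_transpose_mul pd_inv(1)[OF assms] sS transpose_mat)
  then have "transpose (matrix_inv S) = transpose (matrix_inv S) ** (S ** matrix_inv S)"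
    by (simp add: pd_inv(1)[OF assms])
  also have "\<dots> = matrix_inv S"
    by (metis \<open>transpose (matrix_inv S) ** S = mat 1\<close> matrix_mul_assoc matrix_mul_lid)
  finally show ?thesis unfolding sym_mat_def .
qed

lemma eig_finite:
  fixes S :: "real^'d^'d"
  assumes "pos_def S"
  shows "finite (real_eigenvalues S)"
proof -
  let ?E = "real_eigenvalues S"
  define ev where "ev l = (SOME v. v \<noteq> 0 \<and> S *v v = l *\<^sub>R v)" for l
  have ev: "ev l \<noteq> 0 \<and> S *v ev l = l *\<^sub>R ev l" if "l \<in> ?E" for l
    unfolding ev_def by (rule someI_ex) (use that in \<open>auto simp: real_eigenvalues_def\<close>)
  have sym: "sym_mat S" using assms pos_def_def by auto
  have inj: "inj_on ev ?E"
  proof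
    fix a b assume a: "a \<in> ?E" and b: "b \<in> ?E" and e: "ev a = ev b"
    then have "a *\<^sub>R ev a = b *\<^sub>R ev a" using ev[OF a] ev[OF b] by metis
    then show "a = b" using ev[OF a] by (simp add: scaleR_cancel_right)
  qed
  have "pairwise orthogonal (ev ` ?E)"
  proof (clarsimp simp: pairwise_def)
    fix a b assume a: "a \<in> ?E" and b: "b \<in> ?E" and ne: "ev a \<noteq> ev b"
    then have "a \<noteq> b" by auto
    have "ev a \<bullet> (S *v ev b) = (S *v ev a) \<bullet> ev b" using sym_dot[OF sym] by blast
    then have "b * (ev a \<bullet> ev b) = a * (ev a \<bullet> ev b)" using ev[OF a] ev[OF b] by simp
    then show "orthogonal (ev a) (ev b)" using \<open>a \<noteq> b\<close> unfolding orthogonal_def by simp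
  qed
  then have "finite (ev ` ?E)" by (rule pairwise_orthogonal_imp_finite)
  then show ?thesis using inj finite_imageD by blast
qed

lemma eig_pos:
  fixes S :: "real^'d^'d"
  assumes "pos_def S" "l \<in> real_eigenvalues S"
  shows "l > 0"
proof -
  obtain v where v: "v \<noteq> 0" "S *v v = l *\<^sub>R v" using assms(2) real_eigenvalues_def by auto
  have "v \<bullet> (S *v v) > 0" using assms(1) v unfolding pos_def_def by auto
  moreover have "v \<bullet> (S *v v) = l * (v \<bullet> v)" using v(2) by simp
  ultimately have "l * (v \<bullet> v) > 0" by simp
  moreover have "v \<bullet> v > 0" using v by simp
  ultimately show ?thesis by (simp add: zero_less_mult_iff)
qed

lemma rayleigh:
  fixes S :: "real^'d^'d"
  assumes "pos_def S"
  shows "lambda_min S > 0" "\<And>u. lambda_min S * (u \<bullet> u) \<le> u \<bullet> (S *v u)"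
proof -
  have sym: "sym_mat S" using assms pos_def_def by auto
  define f where "f u = u \<bullet> (S *v u)" for u :: "real^'d"
  have cont: "continuous_on (sphere 0 1) f" unfolding f_def
    by (intro continuous_intros linear_continuous_on matrix_vector_mul_linear continuous_on_id)
  obtain e :: "real^'d" where "norm e = 1" using vector_choose_size[of 1] by auto
  then have ne: "sphere (0::real^'d) 1 \<noteq> {}" by auto
  obtain u0 where u0: "u0 \<in> sphere 0 1" "\<And>y. y \<in> sphere 0 1 \<Longrightarrow> f u0 \<le> f y"
    using continuous_attains_inf[OF compact_sphere ne cont] by blast
  define \<mu> where "\<mu> = f u0"
  have sc: "f (c *\<^sub>R u) = c^2 * f u" for c u
    by (simp add: f_def algebra_simps power2_eq_square)
  have g: "\<mu> * (u \<bullet> u) \<le> f u" for u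
  proof (cases "u = 0")
    case True then show ?thesis by (simp add: f_def)
  next
    case False
    define v where "v = (1 / norm u) *\<^sub>R u"
    have "v \<in> sphere 0 1" using False by (simp add: v_def)
    then have "\<mu> \<le> f v" using u0 \<mu>_def by auto
    also have "f v = f u / (norm u)^2" by (simp add: v_def sc power_divide)
    finally have "\<mu> * (norm u)^2 \<le> f u" using False by (simp add: field_simps)
    then show ?thesis by (simp add: power2_norm_eq_inner)
  qed
  have u0n: "u0 \<bullet> u0 = 1" using u0(1) by (simp add: dot_square_norm)
  define w where "w = S *v u0 - \<mu> *\<^sub>R u0"
  have w0: "w = 0"
  proof (rule ccontr)
    assume "w \<noteq> 0"
    then have wp: "w \<bullet> w > 0" by simp
    define G where "G = f w - \<mu> * (w \<bullet> w)"
    have G0: "G \<ge> 0" using g G_def by auto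
    define t where "t = (w \<bullet> w) / (G + 1)"
    have tp: "t > 0" using wp G0 t_def by simp
    have "0 \<le> f (u0 - t *\<^sub>R w) - \<mu> * ((u0 - t *\<^sub>R w) \<bullet> (u0 - t *\<^sub>R w))" using g by simp
    also have "\<dots> = (f u0 - \<mu> * (u0 \<bullet> u0)) - 2 * t * (w \<bullet> w) + t^2 * G"
    proof -
      have s1: "u0 \<bullet> (S *v w) = (S *v u0) \<bullet> w" using sym_dot[OF sym] by blast
      have s2: "u0 \<bullet> (S *v (S *v u0)) = (S *v u0) \<bullet> (S *v u0)" using sym_dot[OF sym] by blast
      show ?thesis unfolding f_def G_def
        by (simp add: algebra_simps inner_commute s1 s2 w_def power2_eq_square)
    qed
    also have "\<dots> = - 2 * t * (w \<bullet> w) + t^2 * G" using u0n \<mu>_def by simp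
    finally have "2 * (w \<bullet> w) \<le> t * G" using tp by (simp add: power2_eq_square algebra_simps)
    moreover have "t * G < w \<bullet> w" unfolding t_def using wp G0
      by (simp add: field_simps)
    ultimately show False using wp by simp
  qed
  have u0ne: "u0 \<noteq> 0" using u0(1) by auto
  have mE: "\<mu> \<in> real_eigenvalues S"
    unfolding real_eigenvalues_def using w0 u0ne w_def by auto
  have fin: "finite (real_eigenvalues S)" by (rule eig_finite[OF assms])
  have lm: "lambda_min S \<in> real_eigenvalues S" "lambda_min S \<le> \<mu>"
    unfolding lambda_min_def using fin mE by (auto intro: Min_in)
  show "lambda_min S > 0" using eig_pos[OF assms lm(1)] .
  show "lambda_min S * (u \<bullet> u) \<le> u \<bullet> (S *v u)" for u
    using g[of u] lm(2) unfolding f_def by (meson inner_ge_zero mult_right_mono order_trans)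
qed

lemma T1:
  fixes A S :: "real^'d^'d"
  assumes "sym_mat S"
  shows "trace (transpose A ** (S ** outer z z ** S)) = (S *v z) \<bullet> (A *v (S *v z))"
proof -
  have e1: "S ** outer z z ** S = outer (S *v z) (S *v z)"
  proof -
    have "transpose S = S" using assms sym_mat_def by auto
    then have "S $ j $ i = S $ i $ j" for i j by (metis transpose_def vec_lambda_beta)
    then show ?thesis
      by (simp add: vec_eq_iff outer_def matrix_matrix_mult_def matrix_vector_mult_def
          sum_distrib_left sum_distrib_right mult_ac)
  qed
  have e2: "trace (transpose A ** outer a a) = a \<bullet> (A *v a)" for a :: "real^'d"
    apply (simp add: trace_def outer_def matrix_matrix_mult_def matrix_vector_mult_def inner_vec_def
        transpose_def sum_distrib_left sum_distrib_right mult_ac)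
    apply (subst sum.swap)
    apply (simp add: mult_ac)
    done
  show ?thesis unfolding e1 e2 ..
qed

lemma T2:
  fixes A S :: "real^'d^'d"
  shows "trace (transpose A ** S) = (\<Sum>k\<in>UNIV. (A *v axis k 1) \<bullet> (S *v axis k 1))"
  by (simp add: trace_def matrix_matrix_mult_def matrix_vector_mult_basis inner_vec_def
        transpose_def column_def mult_ac)

lemma polar:
  fixes M :: "real^'d^'d"
  assumes sym: "sym_mat M" and p: "\<And>v. 0 \<le> v \<bullet> (M *v v)" and q: "\<And>v. v \<bullet> (M *v v) \<le> \<beta> * (v \<bullet> v)"
    and c: "c > 0" and b0: "\<beta> \<ge> 0"
  shows "\<bar>a \<bullet> (M *v b)\<bar> \<le> \<beta> / 2 * (c^2 * (a \<bullet> a) + (b \<bullet> b) / c^2)"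
proof -
  define P where "P = c *\<^sub>R a + (1/c) *\<^sub>R b"
  define N where "N = c *\<^sub>R a - (1/c) *\<^sub>R b"
  have s: "b \<bullet> (M *v a) = a \<bullet> (M *v b)" using sym_dot[OF sym, of b a] by (simp add: inner_commute)
  have e: "P \<bullet> (M *v P) - N \<bullet> (M *v N) = 4 * (a \<bullet> (M *v b))"
    unfolding P_def N_def using c by (simp add: algebra_simps s)
  have f: "P \<bullet> P + N \<bullet> N = 2 * (c^2 * (a \<bullet> a) + (b \<bullet> b) / c^2)"
    unfolding P_def N_def using c by (simp add: algebra_simps power2_eq_square inner_commute)
  have "0 \<le> P \<bullet> P" "0 \<le> N \<bullet> N" by auto
  then have "\<beta> * (P \<bullet> P) \<le> \<beta> * (P \<bullet> P + N \<bullet> N)" "\<beta> * (N \<bullet> N) \<le> \<beta> * (P \<bullet> P + N \<bullet> N)"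
    using b0 by (simp_all add: mult_left_mono)
  moreover have "\<beta> * (P \<bullet> P + N \<bullet> N) = 2 * (\<beta> * (c^2 * (a \<bullet> a) + (b \<bullet> b) / c^2))"
    using f by simp
  ultimately have "4 * \<bar>a \<bullet> (M *v b)\<bar> \<le> 2 * (\<beta> * (c^2 * (a \<bullet> a) + (b \<bullet> b) / c^2))"
    using e p[of P] p[of N] q[of P] q[of N] unfolding abs_le_iff by linarith
  then show ?thesis by simp
qed

lemma frob_lin:
  fixes A X Y :: "real^'d^'d"
  shows "frob_inner A (c *\<^sub>R (X - Y)) = c * (trace (transpose A ** X) - trace (transpose A ** Y))"
  by (simp add: frob_inner_def trace_def matrix_matrix_mult_def sum_subtractf sum_distrib_left
      algebra_simps)

lemma score_bound:
  fixes \<Sigma> M :: "real^'d^'d"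
  assumes pd: "pos_def \<Sigma>" and pM: "psd M" and lM: "loewner_le M (\<beta> *\<^sub>R mat 1)" and b: "\<beta> > 0"
  shows "\<bar>score \<Sigma> z M\<bar> \<le> (1/2) * (1 + \<beta> / lambda_min \<Sigma>) * (z \<bullet> (matrix_inv \<Sigma> *v z) + real CARD('d))"
    and "0 \<le> z \<bullet> (matrix_inv \<Sigma> *v z)"
proof -
  define S where "S = matrix_inv \<Sigma>"
  define l where "l = lambda_min \<Sigma>"
  define u where "u = S *v z"
  define Q where "Q = z \<bullet> (S *v z)"
  have lp: "l > 0" using rayleigh(1)[OF pd] l_def by simp
  have ray: "l * (v \<bullet> v) \<le> v \<bullet> (\<Sigma> *v v)" for v using rayleigh(2)[OF pd] l_def by simp
  have symS: "sym_mat S" using inv_sym[OF pd] S_def by simp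
  have symE: "sym_mat \<Sigma>" using pd pos_def_def by auto
  have symM: "sym_mat M" using pM psd_def by auto
  have ES: "\<Sigma> *v (S *v v) = v" for v using pd_inv(1)[OF pd] S_def
    by (simp add: matrix_vector_mul_assoc)
  have p: "0 \<le> v \<bullet> (M *v v)" for v using pM psd_def by auto
  have q: "v \<bullet> (M *v v) \<le> \<beta> * (v \<bullet> v)" for v
  proof -
    have "0 \<le> v \<bullet> ((\<beta> *\<^sub>R mat 1 - M) *v v)" using lM loewner_le_def psd_def by blast
    then show ?thesis by (simp add: algebra_simps scaleR_matrix_vector_assoc[symmetric])
  qed
  have uEu: "u \<bullet> (\<Sigma> *v u) = Q" unfolding u_def Q_def ES by (simp add: inner_commute)
  have Q0: "0 \<le> Q" proof -
    have "0 \<le> l * (u \<bullet> u)" using lp by simp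
    then show ?thesis using ray[of u] uEu by linarith
  qed
  then show "0 \<le> z \<bullet> (matrix_inv \<Sigma> *v z)" using Q_def S_def by simp
  have uu: "u \<bullet> u \<le> Q / l" using ray[of u] uEu lp by (simp add: field_simps mult.commute)
  have uMu: "u \<bullet> (M *v u) \<le> \<beta> * Q / l"
  proof -
    have "u \<bullet> (M *v u) \<le> \<beta> * (u \<bullet> u)" by (rule q)
    also have "\<dots> \<le> \<beta> * (Q / l)" using uu b by (intro mult_left_mono) auto
    finally show ?thesis by simp
  qed
  define e where "e k = (axis k 1 :: real^'d)" for k
  have Se: "(S *v e k) \<bullet> (S *v e k) \<le> 1 / l^2" for k
  proof -
    define w where "w = S *v e k"
    have "l * (w \<bullet> w) \<le> w \<bullet> e k" using ray[of w] unfolding w_def ES .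
    also have "\<dots> \<le> norm w * norm (e k)" by (rule norm_cauchy_schwarz)
    also have "\<dots> = norm w" by (simp add: e_def)
    finally have "l * (norm w)^2 \<le> norm w" by (simp add: power2_norm_eq_inner)
    then have "l * norm w \<le> 1"
      by (cases "norm w = 0") (auto simp: power2_eq_square)
    then have "norm w \<le> 1 / l" using lp by (simp add: field_simps mult.commute)
    then have "(norm w)^2 \<le> (1/l)^2" by (simp add: power_mono)
    then show ?thesis by (simp add: w_def power2_norm_eq_inner power_divide)
  qed
  have tb: "\<bar>(M *v e k) \<bullet> (S *v e k)\<bar> \<le> \<beta> / l" for k
  proof -
    have "(M *v e k) \<bullet> (S *v e k) = e k \<bullet> (M *v (S *v e k))" by (rule sym_dot[OF symM, symmetric])
    moreover have A: "\<bar>e k \<bullet> (M *v (S *v e k))\<bar> \<le> \<beta> / 2 * ((1 / sqrt l)^2 * (e k \<bullet> e k) + ((S *v e k) \<bullet> (S *v e k)) / (1 / sqrt l)^2)"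
      by (rule polar[OF symM p q]) (use lp b in auto)
    moreover have B: "(1 / sqrt l)^2 * (e k \<bullet> e k) + ((S *v e k) \<bullet> (S *v e k)) / (1 / sqrt l)^2 \<le> 2 / l"
    proof -
      have "(1 / sqrt l)^2 = 1 / l" using lp by (simp add: power_divide)
      moreover have "e k \<bullet> e k = 1" by (simp add: e_def inner_axis_axis)
      moreover have "((S *v e k) \<bullet> (S *v e k)) * l \<le> 1 / l" using Se[of k] lp
        by (simp add: field_simps power2_eq_square)
      ultimately show ?thesis using lp by (simp add: field_simps)
    qed
    moreover have "\<beta> / 2 * ((1 / sqrt l)^2 * (e k \<bullet> e k) + ((S *v e k) \<bullet> (S *v e k)) / (1 / sqrt l)^2) \<le> \<beta> / 2 * (2 / l)"
      by (rule mult_left_mono[OF B]) (use b in auto)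
    moreover have "\<beta> / 2 * (2 / l) = \<beta> / l" by simp
    ultimately show ?thesis by linarith
  qed
  have sumb: "\<bar>\<Sum>k\<in>UNIV. (M *v e k) \<bullet> (S *v e k)\<bar> \<le> real CARD('d) * (\<beta> / l)"
  proof -
    have "\<bar>\<Sum>k\<in>UNIV. (M *v e k) \<bullet> (S *v e k)\<bar> \<le> (\<Sum>k\<in>UNIV. \<bar>(M *v e k) \<bullet> (S *v e k)\<bar>)"
      by (rule sum_abs)
    also have "\<dots> \<le> real CARD('d) * (\<beta> / l)"
      using sum_bounded_above[of UNIV "\<lambda>k. \<bar>(M *v e k) \<bullet> (S *v e k)\<bar>" "\<beta> / l"] tb by simp
    finally show ?thesis .
  qed
  have ESe: "(\<Sigma> *v e k) \<bullet> (S *v e k) = 1" for k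
  proof -
    have "(\<Sigma> *v e k) \<bullet> (S *v e k) = e k \<bullet> (\<Sigma> *v (S *v e k))" by (rule sym_dot[OF symE, symmetric])
    then show ?thesis by (simp add: ES e_def inner_axis_axis)
  qed
  have sc: "score \<Sigma> z M = (1/2) * ((u \<bullet> (M *v u) - Q) - ((\<Sum>k\<in>UNIV. (M *v e k) \<bullet> (S *v e k)) - real CARD('d)))"
  proof -
    have "score \<Sigma> z M = (1/2) * (trace (transpose (M - \<Sigma>) ** (S ** outer z z ** S)) - trace (transpose (M - \<Sigma>) ** S))"
      unfolding score_def S_def by (rule frob_lin)
    also have "trace (transpose (M - \<Sigma>) ** (S ** outer z z ** S)) = u \<bullet> ((M - \<Sigma>) *v u)"
      unfolding u_def by (rule T1[OF symS])
    also have "\<dots> = u \<bullet> (M *v u) - Q" using uEu by (simp add: algebra_simps)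
    also have "trace (transpose (M - \<Sigma>) ** S) = (\<Sum>k\<in>UNIV. ((M - \<Sigma>) *v e k) \<bullet> (S *v e k))"
      unfolding e_def by (rule T2)
    also have "\<dots> = (\<Sum>k\<in>UNIV. (M *v e k) \<bullet> (S *v e k) - 1)"
      using ESe by (simp add: algebra_simps)
    also have "\<dots> = (\<Sum>k\<in>UNIV. (M *v e k) \<bullet> (S *v e k)) - real CARD('d)"
      by (simp add: sum_subtractf)
    finally show ?thesis .
  qed
  have "\<bar>score \<Sigma> z M\<bar> \<le> (1/2) * (\<beta> * Q / l + Q + real CARD('d) * (\<beta> / l) + real CARD('d))"
  proof -
    have s1: "(\<Sum>k\<in>UNIV. (M *v e k) \<bullet> (S *v e k)) \<le> real CARD('d) * (\<beta> / l)"
     "- (\<Sum>k\<in>UNIV. (M *v e k) \<bullet> (S *v e k)) \<le> real CARD('d) * (\<beta> / l)"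
      using sumb by auto
    have s2: "0 \<le> \<beta> * Q / l" using b Q0 lp by simp
    have aux: "\<bar>1/2*(a - q - (s - d))\<bar> \<le> 1/2*(K + q + D + d)"
      if "a \<le> K" "0\<le>a" "0\<le>q" "s \<le> D" "-s \<le> D" "0 \<le> K" "0\<le>d" for a q s d K D :: real
      using that by (simp add: abs_le_iff)
    show ?thesis unfolding sc by (rule aux[OF uMu p[of u] Q0 s1 s2]) simp
  qed
  also have "\<dots> = (1/2) * (1 + \<beta> / l) * (Q + real CARD('d))"
    using lp by (simp add: field_simps)
  finally show "\<bar>score \<Sigma> z M\<bar> \<le> (1/2) * (1 + \<beta> / lambda_min \<Sigma>) * (z \<bullet> (matrix_inv \<Sigma> *v z) + real CARD('d))"
    using l_def Q_def S_def by simp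
qed

lemma Q_meas: "(\<lambda>z::real^'d. z \<bullet> (S *v z)) \<in> borel_measurable borel"
  by (intro borel_measurable_continuous_onI continuous_intros linear_continuous_on
      matrix_vector_mul_linear continuous_on_id)

lemma scale_int:
  fixes h :: "real^'d \<Rightarrow> ennreal"
  assumes [measurable]: "h \<in> borel_measurable borel"
  shows "(\<integral>\<^sup>+ z. h ((1 / sqrt 2) *\<^sub>R z) \<partial>lborel) = ennreal (sqrt 2 ^ CARD('d)) * (\<integral>\<^sup>+ z. h z \<partial>lborel)"
proof -
  have eq: "lborel = density (distr lborel borel (\<lambda>x::real^'d. sqrt 2 *\<^sub>R x)) (\<lambda>_. ennreal (sqrt 2 ^ CARD('d)))"
    using lborel_affine[of "sqrt 2" "0::real^'d"] by simp
  have "(\<integral>\<^sup>+ z. h ((1 / sqrt 2) *\<^sub>R z) \<partial>lborel) =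
      (\<integral>\<^sup>+ z. h ((1 / sqrt 2) *\<^sub>R z) \<partial>(density (distr lborel borel (\<lambda>x::real^'d. sqrt 2 *\<^sub>R x)) (\<lambda>_. ennreal (sqrt 2 ^ CARD('d)))))"
    by (subst eq[symmetric]) (rule refl)
  also have "\<dots> = (\<integral>\<^sup>+ z. ennreal (sqrt 2 ^ CARD('d)) * h ((1 / sqrt 2) *\<^sub>R z) \<partial>(distr lborel borel (\<lambda>x::real^'d. sqrt 2 *\<^sub>R x)))"
    by (subst nn_integral_density) auto
  also have "\<dots> = (\<integral>\<^sup>+ x. ennreal (sqrt 2 ^ CARD('d)) * h ((1 / sqrt 2) *\<^sub>R (sqrt 2 *\<^sub>R x)) \<partial>lborel)"
    by (subst nn_integral_distr) auto
  also have "\<dots> = (\<integral>\<^sup>+ x. ennreal (sqrt 2 ^ CARD('d)) * h x \<partial>lborel)"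
    by simp
  also have "\<dots> = ennreal (sqrt 2 ^ CARD('d)) * (\<integral>\<^sup>+ z. h z \<partial>lborel)"
    by (rule nn_integral_cmult) simp
  finally show ?thesis .
qed

lemma mvn_meas: "mvn_density (\<Sigma>::real^'d^'d) \<in> borel_measurable borel"
proof -
  have [measurable]: "(\<lambda>z::real^'d. z \<bullet> (matrix_inv \<Sigma> *v z)) \<in> borel_measurable borel" by (rule Q_meas)
  show ?thesis unfolding mvn_density_def by measurable
qed

lemma tail:
  fixes \<Sigma> :: "real^'d^'d" and X :: "'s \<Rightarrow> real^'d"
  assumes P: "prob_space P" and dX: "distributed P lborel X (\<lambda>z. ennreal (mvn_density \<Sigma> z))"
  shows "measure P {\<omega> \<in> space P. s \<le> X \<omega> \<bullet> (matrix_inv \<Sigma> *v X \<omega>)}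
           \<le> sqrt 2 ^ CARD('d) * exp (- s / 4)"
proof -
  interpret prob_space P by (rule P)
  define S where "S = matrix_inv \<Sigma>"
  define Q where "Q z = z \<bullet> (S *v z)" for z :: "real^'d"
  define f where "f z = mvn_density \<Sigma> z" for z
  have [measurable]: "Q \<in> borel_measurable borel" unfolding Q_def by (rule Q_meas)
  have [measurable]: "f \<in> borel_measurable borel" unfolding f_def by (rule mvn_meas)
  have Xm[measurable]: "X \<in> measurable P lborel" using dX by (rule distributed_measurable)
  have Xm'[measurable]: "X \<in> borel_measurable P" using Xm by simp
  have dd: "distr P lborel X = density lborel (\<lambda>z. ennreal (f z))"
    using dX unfolding f_def by (rule distributed_distr_eq_density)
  have Qs: "Q ((1 / sqrt 2) *\<^sub>R z) = Q z / 2" for z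
    unfolding Q_def by (simp add: algebra_simps)
  have f1: "(\<integral>\<^sup>+ z. ennreal (f z) \<partial>lborel) = 1"
  proof -
    have "emeasure (distr P lborel X) UNIV = emeasure P (space P)"
      by (subst emeasure_distr) auto
    then have "emeasure (density lborel (\<lambda>z. ennreal (f z))) UNIV = 1" using dd by (simp add: emeasure_space_1)
    then show ?thesis by (subst (asm) emeasure_density) auto
  qed
  define A where "A = {\<omega> \<in> space P. s \<le> Q (X \<omega>)}"
  have Am: "A \<in> sets P" unfolding A_def by measurable
  have "emeasure P A = (\<integral>\<^sup>+ \<omega>. indicator A \<omega> \<partial>P)" using Am by simp
  also have "\<dots> \<le> (\<integral>\<^sup>+ \<omega>. ennreal (exp ((Q (X \<omega>) - s) / 4)) \<partial>P)"
  proof (rule nn_integral_mono)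
    fix \<omega> assume "\<omega> \<in> space P"
    show "indicator A \<omega> \<le> ennreal (exp ((Q (X \<omega>) - s) / 4))"
      by (cases "\<omega> \<in> A") (auto simp: A_def)
  qed
  also have "\<dots> = (\<integral>\<^sup>+ z. ennreal (exp ((Q z - s) / 4)) \<partial>(distr P lborel X))"
    by (subst nn_integral_distr) auto
  also have "\<dots> = (\<integral>\<^sup>+ z. ennreal (f z) * ennreal (exp ((Q z - s) / 4)) \<partial>lborel)"
    unfolding dd by (subst nn_integral_density) auto
  also have "\<dots> = (\<integral>\<^sup>+ z. ennreal (exp (- s / 4)) * ennreal (f ((1 / sqrt 2) *\<^sub>R z)) \<partial>lborel)"
  proof (rule nn_integral_cong)
    fix z :: "real^'d"
    define N where "N = sqrt ((2 * pi) ^ CARD('d) * det \<Sigma>)"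
    have fw: "f w = exp (- Q w / 2) / N" for w
      by (simp add: f_def mvn_density_def Q_def S_def N_def)
    have "exp (- Q z / 2) * exp ((Q z - s) / 4) = exp (- Q z / 2 + (Q z - s) / 4)" by (rule mult_exp_exp)
    also have "\<dots> = exp (- s / 4 + - (Q z / 2) / 2)" by (rule arg_cong[where f=exp]) (simp add: field_simps)
    also have "\<dots> = exp (- s / 4) * exp (- (Q z / 2) / 2)" by (rule mult_exp_exp[symmetric])
    finally have "f z * exp ((Q z - s) / 4) = exp (- s / 4) * f ((1 / sqrt 2) *\<^sub>R z)"
      unfolding fw Qs by (simp add: field_simps)
    then show "ennreal (f z) * ennreal (exp ((Q z - s) / 4)) = ennreal (exp (- s / 4)) * ennreal (f ((1 / sqrt 2) *\<^sub>R z))"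
      by (simp add: ennreal_mult''[symmetric] ennreal_mult'[symmetric])
  qed
  also have "\<dots> = ennreal (exp (- s / 4)) * (\<integral>\<^sup>+ z. ennreal (f ((1 / sqrt 2) *\<^sub>R z)) \<partial>lborel)"
    by (rule nn_integral_cmult) simp
  also have "(\<integral>\<^sup>+ z. ennreal (f ((1 / sqrt 2) *\<^sub>R z)) \<partial>lborel) = ennreal (sqrt 2 ^ CARD('d))"
    using scale_int[of "\<lambda>z. ennreal (f z)"] f1 by simp
  finally have "emeasure P A \<le> ennreal (sqrt 2 ^ CARD('d) * exp (- s / 4))"
    by (simp add: ennreal_mult''[symmetric] mult.commute)
  then have "measure P A \<le> sqrt 2 ^ CARD('d) * exp (- s / 4)"
    by (simp add: emeasure_eq_measure)
  then show ?thesis unfolding A_def Q_def S_def .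
qed

lemma real_ineq:
  fixes d \<gamma> t :: real
  assumes that: "d = real n" and d: "d \<ge> 1" and g: "\<gamma> > 0" and t: "t \<ge> 6 * \<gamma> * d"
  shows "sqrt 2 ^ n * exp (- (2 * t / \<gamma> - d) / 4) \<le> exp (- t / (9 * \<gamma> * sqrt d))"
proof -
  have "2 \<le> exp (1::real)" using exp_ge_add_one_self[of 1] by simp
  then have "sqrt 2 \<le> sqrt (exp 1)" by simp
  also have "sqrt (exp 1) = exp (1/2)"
  proof -
    have "exp (1/2) ^ 2 = exp (1::real)" by (simp add: power2_eq_square mult_exp_exp)
    then show ?thesis using real_sqrt_unique[of "exp (1/2)" "exp 1"] by simp
  qed
  finally have "sqrt 2 ^ n \<le> exp (1/2) ^ n" by (simp add: power_mono)
  also have "\<dots> = exp (d / 2)" using that by (simp add: exp_of_nat_mult[symmetric])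
  finally have A: "sqrt 2 ^ n * exp (- (2 * t / \<gamma> - d) / 4) \<le> exp (d / 2) * exp (- (2 * t / \<gamma> - d) / 4)"
    by (simp add: mult_right_mono)
  have "0 \<le> 6 * \<gamma> * d" using g d by simp
  then have tp: "t \<ge> 0" using t by linarith
  have sd: "sqrt d \<ge> 1" using d by simp
  have "t / (9 * \<gamma> * sqrt d) \<le> t / (9 * \<gamma>)"
    using sd g tp by (intro divide_left_mono) (auto simp: mult_pos_pos)
  moreover have "t / \<gamma> \<ge> 6 * d" using t g by (simp add: field_simps)
  moreover have "t / (9 * \<gamma>) = (t / \<gamma>) / 9" by simp
  moreover have "- (2 * t / \<gamma> - d) / 4 = - (t / \<gamma>) / 2 + d / 4" by simp
  moreover have "- t / (9 * \<gamma> * sqrt d) = - (t / (9 * \<gamma> * sqrt d))" by simp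
  moreover have H: "\<And>a b. b \<le> a / 9 \<Longrightarrow> 6 * d \<le> a \<Longrightarrow> d / 2 + (- a / 2 + d / 4) \<le> - b"
    using d by linarith
  ultimately have "d / 2 + (- (2 * t / \<gamma> - d) / 4) \<le> - t / (9 * \<gamma> * sqrt d)"
    by (metis minus_divide_left)
  then have "exp (d / 2) * exp (- (2 * t / \<gamma> - d) / 4) \<le> exp (- t / (9 * \<gamma> * sqrt d))"
    by (simp add: mult_exp_exp)
  with A show ?thesis by linarith
qed

theorem lemma8:
  fixes P :: "'s measure"
    and \<Sigma> :: "real^'d^'d"
    and n :: nat
    and x :: "nat \<Rightarrow> 's \<Rightarrow> real^'d"
    and R :: "'r measure"
    and U :: "'s \<Rightarrow> 'r"
    and mech :: "(nat \<Rightarrow> real^'d) \<Rightarrow> 'r \<Rightarrow> real^'d^'d"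
    and \<beta>u \<gamma> T :: real
    and i :: nat
  assumes "prob_space P"
    and "pos_def \<Sigma>"
    and "\<And>j. j < n \<Longrightarrow> distributed P lborel (x j) (\<lambda>z. ennreal (mvn_density \<Sigma> z))"
    and "prob_space.indep_vars P (\<lambda>_. borel) x {..<n}"
    and "U \<in> P \<rightarrow>\<^sub>M R"
    and "\<And>A B. A \<in> sets (PiM {..<n} (\<lambda>_. borel)) \<Longrightarrow> B \<in> sets R \<Longrightarrow>
           measure P {\<omega> \<in> space P. (\<lambda>j\<in>{..<n}. x j \<omega>) \<in> A \<and> U \<omega> \<in> B}
           = measure P {\<omega> \<in> space P. (\<lambda>j\<in>{..<n}. x j \<omega>) \<in> A} * measure P {\<omega> \<in> space P. U \<omega> \<in> B}"
    and "(\<lambda>(xs, r). mech xs r) \<in> (PiM {..<n} (\<lambda>_. borel)) \<Otimes>\<^sub>M R \<rightarrow>\<^sub>M borel"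
    and "\<beta>u > 0"
    and "\<And>xs r. psd (mech xs r) \<and> loewner_le (mech xs r) (\<beta>u *\<^sub>R mat 1)"
    and "\<gamma> = 1 + \<beta>u / lambda_min \<Sigma>"
    and "i < n"
    and "T \<ge> 6 * \<gamma> * real CARD('d) powr (3/2)"
  shows "(\<integral>\<^sup>+ t \<in> {T..}.
            ennreal (measure P {\<omega> \<in> space P.
               \<bar>score \<Sigma> (x i \<omega>) (mech (\<lambda>j\<in>{..<n}. x j \<omega>) (U \<omega>))\<bar> \<ge> t}) \<partial>lborel)
         \<le> ennreal (9 * \<gamma> * sqrt (real CARD('d)) * exp (- T / (9 * \<gamma> * sqrt (real CARD('d)))))"
proof -
  note P = assms(1) and pd = assms(2) and dX = assms(3) and bu = assms(8) and mM = assms(9)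
    and gdef = assms(10) and iN = assms(11) and TT = assms(12)
  interpret prob_space P by (rule P)
  define d where "d = real CARD('d)"
  define c where "c = 9 * \<gamma> * sqrt d"
  define Q where "Q z = z \<bullet> (matrix_inv \<Sigma> *v z)" for z :: "real^'d"
  have d1: "d \<ge> 1" unfolding d_def by simp
  have lp: "lambda_min \<Sigma> > 0" by (rule rayleigh(1)[OF pd])
  have gp: "\<gamma> > 0" using gdef lp bu by (simp add: add_pos_nonneg)
  have cp: "c > 0" unfolding c_def using gp d1 by simp
  have dpow: "d powr (3/2) \<ge> d"
  proof -
    have "d powr 1 \<le> d powr (3/2)" using d1 by (intro powr_mono) auto
    then show ?thesis using d1 by simp
  qed
  have T6: "T \<ge> 6 * \<gamma> * d"
  proof -
    have "6 * \<gamma> * d \<le> 6 * \<gamma> * d powr (3/2)" using dpow gp by simp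
    then show ?thesis using TT d_def by simp
  qed
  have Xm[measurable]: "x i \<in> measurable P lborel" using dX[OF iN] by (rule distributed_measurable)
  have Xm'[measurable]: "x i \<in> borel_measurable P" using Xm by simp
  have [measurable]: "Q \<in> borel_measurable borel" unfolding Q_def by (rule Q_meas)
  have pt: "measure P {\<omega> \<in> space P.
               \<bar>score \<Sigma> (x i \<omega>) (mech (\<lambda>j\<in>{..<n}. x j \<omega>) (U \<omega>))\<bar> \<ge> t} \<le> exp (- t / c)"
    if tT: "t \<ge> T" for t
  proof -
    define s where "s = 2 * t / \<gamma> - d"
    have sub: "{\<omega> \<in> space P. \<bar>score \<Sigma> (x i \<omega>) (mech (\<lambda>j\<in>{..<n}. x j \<omega>) (U \<omega>))\<bar> \<ge> t}
       \<subseteq> {\<omega> \<in> space P. s \<le> Q (x i \<omega>)}"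
    proof safe
      fix \<omega> assume "\<omega> \<in> space P" and h: "t \<le> \<bar>score \<Sigma> (x i \<omega>) (mech (\<lambda>j\<in>{..<n}. x j \<omega>) (U \<omega>))\<bar>"
      have "\<bar>score \<Sigma> (x i \<omega>) (mech (\<lambda>j\<in>{..<n}. x j \<omega>) (U \<omega>))\<bar> \<le> (1/2) * \<gamma> * (Q (x i \<omega>) + d)"
        using score_bound(1)[OF pd conjunct1[OF mM] conjunct2[OF mM] bu] gdef unfolding Q_def d_def by simp
      then have "t \<le> (1/2) * \<gamma> * (Q (x i \<omega>) + d)" using h by linarith
      then have "2 * t / \<gamma> \<le> Q (x i \<omega>) + d" using gp by (simp add: field_simps)
      then show "s \<le> Q (x i \<omega>)" unfolding s_def by linarith
    qed
    have Bm: "{\<omega> \<in> space P. s \<le> Q (x i \<omega>)} \<in> sets P" by measurable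
    have "measure P {\<omega> \<in> space P.
               \<bar>score \<Sigma> (x i \<omega>) (mech (\<lambda>j\<in>{..<n}. x j \<omega>) (U \<omega>))\<bar> \<ge> t}
        \<le> measure P {\<omega> \<in> space P. s \<le> Q (x i \<omega>)}"
      by (rule finite_measure_mono[OF sub Bm])
    also have "\<dots> \<le> sqrt 2 ^ CARD('d) * exp (- s / 4)"
      unfolding Q_def by (rule tail[OF P dX[OF iN]])
    also have "\<dots> \<le> exp (- t / c)"
      unfolding s_def c_def using real_ineq[OF d_def d1 gp] T6 tT by simp
    finally show ?thesis .
  qed
  have hi: "((\<lambda>t. exp (- t / c) * indicator {T..} t) has_integral (c * exp (- T / c))) UNIV"
  proof -
    have "((\<lambda>t. exp (- (1 / c) * t)) has_integral exp (- (1 / c) * T) / (1 / c)) {T..}"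
      by (rule has_integral_exp_minus_to_infinity) (use cp in simp)
    then have "((\<lambda>t. if t \<in> {T..} then exp (- (1 / c) * t) else 0) has_integral exp (- (1 / c) * T) / (1 / c)) UNIV"
      by (subst has_integral_restrict_UNIV)
    moreover have "(\<lambda>t. if t \<in> {T..} then exp (- (1 / c) * t) else 0) = (\<lambda>t. exp (- t / c) * indicator {T..} t)"
      by (auto simp: indicator_def fun_eq_iff)
    moreover have "exp (- (1 / c) * T) / (1 / c) = c * exp (- T / c)" by simp
    ultimately show ?thesis by (simp add: mult.commute)
  qed
  have "(\<integral>\<^sup>+ t \<in> {T..}.
            ennreal (measure P {\<omega> \<in> space P.
               \<bar>score \<Sigma> (x i \<omega>) (mech (\<lambda>j\<in>{..<n}. x j \<omega>) (U \<omega>))\<bar> \<ge> t}) \<partial>lborel)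
        \<le> (\<integral>\<^sup>+ t. ennreal (exp (- t / c) * indicator {T..} t) \<partial>lborel)"
  proof (rule nn_integral_mono)
    fix t :: real
    show "ennreal (measure P {\<omega> \<in> space P.
               \<bar>score \<Sigma> (x i \<omega>) (mech (\<lambda>j\<in>{..<n}. x j \<omega>) (U \<omega>))\<bar> \<ge> t}) * indicator {T..} t
          \<le> ennreal (exp (- t / c) * indicator {T..} t)"
      using pt[of t] by (cases "t \<in> {T..}") (auto simp: indicator_def)
  qed
  also have "(\<integral>\<^sup>+ t. ennreal (exp (- t / c) * indicator {T..} t) \<partial>lborel) = ennreal (c * exp (- T / c))"
    by (rule nn_integral_has_integral_lborel[OF _ _ hi]) auto
  finally show ?thesis unfolding c_def d_def .
qed

end
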